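(* In the model described in the context, for every number of users $N\in\mathbb{N}$, $$\Delta C(N)\le \frac{1}{T}\sum_{t=0}^{T-1}\sum_{m=1}^{M}S(m)\sum_{n\in\mathcal{B}_t(m)}\mathbb{E}\bigl[I_{n,t}(m)\,C'(L_t)-C'(L_{t-1})\bigr].$$
   Context: There are $N$ users, $M$ data items and a period of $T$ time slots. Item $m\in\{1,\dots,M\}$ has size $S(m)>0$. For each user $n$ and slot $t$ there is a demand profile $\mathbf{P}_{n,t}=(P_{n,t}(m))_{m=1}^M$ with $P_{n,t}(m)\ge 0$ and $\sum_m P_{n,t}(m)\le 1$. The profiles are periodic: $\mathbf{P}_{n,t}=\mathbf{P}_{n,t+kT}$ for all integers $k\ge 0$. The demand is modeled by $\{0,1\}$-valued random variables $I_{n,t}(m)$ with $\Pr(I_{n,t}(m)=1)=P_{n,t}(m)$ and $\sum_m I_{n,t}(m)\le 1$ (each user requests at most one item per slot). For $n\neq k$, $(I_{n,t}(m))_m$ is independent of $(I_{k,t}(j))_j$. The non-proactive load is $L_t=\sum_{m=1}^M\sum_{n=1}^N S(m)I_{n,t}(m)$. The cost function $C:\mathbb{R}_+\to\mathbb{R}_+$ is smooth, strictly convex and monotonically increasing, with derivative $C'$. Slot indices are taken modulo $T$, so $L_{-1}$ stands for $L_{T-1}$ and $x_{n,T}=x_{n,0}$. The non-proactive cost is $C^{\mathcal N}(N)=\frac1T\sum_{t=0}^{T-1}\mathbb{E}[C(L_t)]$. The proactive cost is $$C^{\mathcal P}(N)=\min_{\mathbf{x}}\ \frac1T\sum_{t=0}^{T-1}\mathbb{E}\Bigl[C\Bigl(L_t+\sum_{m=1}^M\sum_{n=1}^N\bigl(x_{n,t+1}(m)-x_{n,t}(m)I_{n,t}(m)\bigr)\Bigr)\Bigr],$$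 minimized over proactive downloads $x_{n,t}(m)$ subject to $0\le x_{n,t}(m)\le S(m)$ for all $m,n$ and $t=0,\dots,T-1$, and $x_{n,0}=x_{n,T}$. Here $x_{n,t+1}(m)$ is the portion of item $m$ sent to user $n$ in slot $t$ ahead of slot $t+1$. The cost reduction is $\Delta C(N)=C^{\mathcal N}(N)-C^{\mathcal P}(N)$. The set of active users for item $m$ at slot $t$ is $\mathcal{B}_t(m)=\{n:\mathbb{E}[I_{n,t}(m)C'(L_t)-C'(L_{t-1})]>0\}$. *)

theory Defs
  imports "HOL-Probability.Probability"
begin

text \<open>Users are indexed by n < N, items by m in {1..M}, slots by t < T.
  Slot indices are taken modulo T.\<close>

definition prev_slot :: "nat \<Rightarrow> nat \<Rightarrow> nat" where
  "prev_slot T t = (t + T - 1) mod T"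

definition next_slot :: "nat \<Rightarrow> nat \<Rightarrow> nat" where
  "next_slot T t = (t + 1) mod T"

definition load :: "nat \<Rightarrow> nat \<Rightarrow> (nat \<Rightarrow> real) \<Rightarrow> (nat \<Rightarrow> nat \<Rightarrow> nat \<Rightarrow> 'a \<Rightarrow> real)
    \<Rightarrow> nat \<Rightarrow> 'a \<Rightarrow> real" where
  "load N M S I t \<omega> = (\<Sum>m=1..M. \<Sum>n<N. S m * I n t m \<omega>)"

definition strictly_convex_on :: "real set \<Rightarrow> (real \<Rightarrow> real) \<Rightarrow> bool" where
  "strictly_convex_on A f \<longleftrightarrow> convex A \<and> (\<forall>x\<in>A. \<forall>y\<in>A. x \<noteq> y \<longrightarrow>
     (\<forall>u::real. 0 < u \<and> u < 1 \<longrightarrow> f (u * x + (1 - u) * y) < u * f x + (1 - u) * f y))"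

definition cost_nonproactive :: "'a measure \<Rightarrow> nat \<Rightarrow> nat \<Rightarrow> nat \<Rightarrow> (nat \<Rightarrow> real)
    \<Rightarrow> (nat \<Rightarrow> nat \<Rightarrow> nat \<Rightarrow> 'a \<Rightarrow> real) \<Rightarrow> (real \<Rightarrow> real) \<Rightarrow> real" where
  "cost_nonproactive Pr N M T S I C =
     (1 / real T) * (\<Sum>t<T. integral\<^sup>L Pr (\<lambda>\<omega>. C (load N M S I t \<omega>)))"

text \<open>Feasible proactive download policies x n t m, for n < N, t < T, m in {1..M};
  the value x_{n,T} is identified with x_{n,0} via next_slot.\<close>
definition feasible_policy :: "nat \<Rightarrow> nat \<Rightarrow> nat \<Rightarrow> (nat \<Rightarrow> real) \<Rightarrow> (nat \<Rightarrow> nat \<Rightarrow> nat \<Rightarrow> real) \<Rightarrow> bool" where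
  "feasible_policy N M T S x \<longleftrightarrow>
     (\<forall>n<N. \<forall>t<T. \<forall>m\<in>{1..M}. 0 \<le> x n t m \<and> x n t m \<le> S m)"

definition proactive_objective :: "'a measure \<Rightarrow> nat \<Rightarrow> nat \<Rightarrow> nat \<Rightarrow> (nat \<Rightarrow> real)
    \<Rightarrow> (nat \<Rightarrow> nat \<Rightarrow> nat \<Rightarrow> 'a \<Rightarrow> real) \<Rightarrow> (real \<Rightarrow> real) \<Rightarrow> (nat \<Rightarrow> nat \<Rightarrow> nat \<Rightarrow> real) \<Rightarrow> real" where
  "proactive_objective Pr N M T S I C x =
     (1 / real T) * (\<Sum>t<T. integral\<^sup>L Pr (\<lambda>\<omega>. C (load N M S I t \<omega>
        + (\<Sum>m=1..M. \<Sum>n<N. x n (next_slot T t) m - x n t m * I n t m \<omega>))))"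

text \<open>Proactive cost C^P(N): the minimum (infimum; it is attained) over feasible policies.\<close>
definition cost_proactive :: "'a measure \<Rightarrow> nat \<Rightarrow> nat \<Rightarrow> nat \<Rightarrow> (nat \<Rightarrow> real)
    \<Rightarrow> (nat \<Rightarrow> nat \<Rightarrow> nat \<Rightarrow> 'a \<Rightarrow> real) \<Rightarrow> (real \<Rightarrow> real) \<Rightarrow> real" where
  "cost_proactive Pr N M T S I C =
     Inf (proactive_objective Pr N M T S I C ` {x. feasible_policy N M T S x})"

definition cost_reduction :: "'a measure \<Rightarrow> nat \<Rightarrow> nat \<Rightarrow> nat \<Rightarrow> (nat \<Rightarrow> real)
    \<Rightarrow> (nat \<Rightarrow> nat \<Rightarrow> nat \<Rightarrow> 'a \<Rightarrow> real) \<Rightarrow> (real \<Rightarrow> real) \<Rightarrow> real" where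
  "cost_reduction Pr N M T S I C =
     cost_nonproactive Pr N M T S I C - cost_proactive Pr N M T S I C"

definition gain :: "'a measure \<Rightarrow> nat \<Rightarrow> nat \<Rightarrow> nat \<Rightarrow> (nat \<Rightarrow> real)
    \<Rightarrow> (nat \<Rightarrow> nat \<Rightarrow> nat \<Rightarrow> 'a \<Rightarrow> real) \<Rightarrow> (real \<Rightarrow> real) \<Rightarrow> nat \<Rightarrow> nat \<Rightarrow> nat \<Rightarrow> real" where
  "gain Pr N M T S I C' n t m =
     integral\<^sup>L Pr (\<lambda>\<omega>. I n t m \<omega> * C' (load N M S I t \<omega>)
                          - C' (load N M S I (prev_slot T t) \<omega>))"

definition active_users :: "'a measure \<Rightarrow> nat \<Rightarrow> nat \<Rightarrow> nat \<Rightarrow> (nat \<Rightarrow> real)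
    \<Rightarrow> (nat \<Rightarrow> nat \<Rightarrow> nat \<Rightarrow> 'a \<Rightarrow> real) \<Rightarrow> (real \<Rightarrow> real) \<Rightarrow> nat \<Rightarrow> nat \<Rightarrow> nat set" where
  "active_users Pr N M T S I C' t m = {n. n < N \<and> gain Pr N M T S I C' n t m > 0}"

end

theory Submission
  imports Defs
begin

lemma tangent_ineq:
  fixes f :: "real \<Rightarrow> real"
  assumes conv: "\<And>x y u. x \<ge> 0 \<Longrightarrow> y \<ge> 0 \<Longrightarrow> 0 < u \<Longrightarrow> u < 1 \<Longrightarrow>
                   f (u*x + (1-u)*y) \<le> u * f x + (1-u) * f y"
    and deriv: "(f has_real_derivative f') (at c within {0..})"
    and c: "c \<ge> 0" and x: "x \<ge> 0"
  shows "f' * (x - c) \<le> f x - f c"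
proof (cases "x = c")
  case True then show ?thesis by simp
next
  case False
  define g where "g s = c + s * (x - c)" for s :: real
  have lim1: "((\<lambda>y. (f y - f c) / (y - c)) \<longlongrightarrow> f') (at c within {0..})"
    using deriv by (simp add: has_field_derivative_iff)
  have gl: "filterlim g (at c within {0..}) (at_right 0)"
  proof (subst filterlim_at, intro conjI)
    have "eventually (\<lambda>s. s < 1) (at_right (0::real))"
      by (rule eventually_at_rightI[where b=1]) auto
    moreover have "eventually (\<lambda>s. s > 0) (at_right (0::real))"
      by (rule eventually_at_rightI[where b=1]) auto
    ultimately show "eventually (\<lambda>s. g s \<in> {0..} \<and> g s \<noteq> c) (at_right 0)"
    proof eventually_elim
      case (elim s)
      have "g s = s * x + (1 - s) * c" by (simp add: g_def algebra_simps)
      moreover have "0 \<le> s * x + (1 - s) * c" using elim c x by simp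
      ultimately show ?case using elim False by (auto simp: g_def)
    qed
    show "(g \<longlongrightarrow> c) (at_right 0)"
      unfolding g_def by (auto intro!: tendsto_eq_intros)
  qed
  have lim2: "((\<lambda>s. (f (g s) - f c) / (g s - c) * (x - c)) \<longlongrightarrow> f' * (x - c)) (at_right 0)"
    by (intro tendsto_mult tendsto_const filterlim_compose[OF lim1 gl])
  have ev: "eventually (\<lambda>s. (f (g s) - f c) / (g s - c) * (x - c) \<le> f x - f c) (at_right (0::real))"
  proof -
    have "eventually (\<lambda>s. s < 1) (at_right (0::real))"
      by (rule eventually_at_rightI[where b=1]) auto
    moreover have "eventually (\<lambda>s. s > 0) (at_right (0::real))"
      by (rule eventually_at_rightI[where b=1]) auto
    ultimately show ?thesis
    proof eventually_elim
      case (elim s)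
      have "g s = s * x + (1 - s) * c" by (simp add: g_def algebra_simps)
      hence "f (g s) \<le> s * f x + (1-s) * f c" using conv[OF x c, of s] elim by simp
      hence "f (g s) - f c \<le> s * (f x - f c)" by (simp add: algebra_simps)
      moreover have "(f (g s) - f c) / (g s - c) * (x - c) = (f (g s) - f c) / s"
        using False elim by (simp add: g_def field_simps)
      ultimately show ?case using elim by (simp add: divide_le_eq mult.commute)
    qed
  qed
  show ?thesis
    by (rule tendsto_upperbound[OF lim2 ev]) simp
qed

lemma cont_ext:
  fixes f :: "real \<Rightarrow> real"
  assumes "continuous_on {0..} f"
  shows "continuous_on UNIV (\<lambda>y. f (max 0 y))"
  by (rule continuous_on_compose2[OF assms]) (auto intro!: continuous_intros)

lemma bounded_on_interval:
  fixes f :: "real \<Rightarrow> real"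
  assumes "continuous_on {0..} f"
  shows "\<exists>K. \<forall>y\<in>{0..B}. \<bar>f y\<bar> \<le> K"
proof -
  have "continuous_on {0..B} f" using assms by (rule continuous_on_subset) auto
  hence "compact (f ` {0..B})" by (rule compact_continuous_image) simp
  hence "bounded (f ` {0..B})" by (rule compact_imp_bounded)
  then obtain K where "\<forall>z\<in>f ` {0..B}. norm z \<le> K" by (auto simp: bounded_iff)
  thus ?thesis by auto
qed

lemma (in prob_space) integrable_comp:
  fixes f :: "real \<Rightarrow> real"
  assumes cf: "continuous_on {0..} f" and g: "g \<in> borel_measurable M"
    and h: "h \<in> borel_measurable M"
    and gb: "\<And>\<omega>. \<omega> \<in> space M \<Longrightarrow> 0 \<le> g \<omega> \<and> g \<omega> \<le> B"
    and hb: "\<And>\<omega>. \<omega> \<in> space M \<Longrightarrow> \<bar>h \<omega>\<bar> \<le> 1"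
  shows "integrable M (\<lambda>\<omega>. h \<omega> * f (g \<omega>))"
proof -
  obtain K where K: "\<forall>y\<in>{0..B}. \<bar>f y\<bar> \<le> K" using bounded_on_interval[OF cf] by blast
  have m1: "(\<lambda>\<omega>. f (max 0 (g \<omega>))) \<in> borel_measurable M"
    using borel_measurable_continuous_onI[OF cont_ext[OF cf]] g
    by (rule measurable_compose[rotated])
  have m2: "(\<lambda>\<omega>. f (g \<omega>)) \<in> borel_measurable M"
    by (rule measurable_cong[THEN iffD1, OF _ m1]) (use gb in auto)
  show ?thesis
  proof (rule integrable_const_bound[where B=K])
    show "AE x in M. norm (h x * f (g x)) \<le> K"
    proof (rule AE_I2)
      fix x assume x: "x \<in> space M"
      have "\<bar>f (g x)\<bar> \<le> K" using K gb[OF x] by auto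
      moreover have "\<bar>h x\<bar> \<le> 1" using hb[OF x] .
      ultimately have "\<bar>h x\<bar> * \<bar>f (g x)\<bar> \<le> 1 * K"
        by (intro mult_mono) auto
      thus "norm (h x * f (g x)) \<le> K" by (simp add: abs_mult)
    qed
    show "(\<lambda>x. h x * f (g x)) \<in> borel_measurable M" using h m2 by measurable
  qed
qed

lemma next_prev:
  assumes "t < T" shows "prev_slot T (next_slot T t) = t"
proof (cases "t + 1 < T")
  case True
  then have "(t + 1 + T - 1) mod T = t" using assms by simp
  then show ?thesis using True by (simp add: prev_slot_def next_slot_def)
next
  case False
  then have "t + 1 = T" using assms by simp
  then show ?thesis using assms by (simp add: prev_slot_def next_slot_def)
qed

lemma next_lt: "0 < T \<Longrightarrow> next_slot T t < T" by (simp add: next_slot_def)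
lemma prev_lt: "0 < T \<Longrightarrow> prev_slot T t < T" by (simp add: prev_slot_def)

lemma reindex_next:
  fixes F :: "nat \<Rightarrow> real"
  assumes "0 < T"
  shows "(\<Sum>t<T. F (next_slot T t)) = (\<Sum>t<T. F t)"
proof -
  have inj: "inj_on (next_slot T) {..<T}"
    by (rule inj_on_inverseI[where g="prev_slot T"]) (simp add: next_prev)
  have img: "next_slot T ` {..<T} = {..<T}"
    by (rule endo_inj_surj) (use inj next_lt[OF assms] in auto)
  have "bij_betw (next_slot T) {..<T} {..<T}" using inj img by (simp add: bij_betw_def)
  then show ?thesis by (rule sum.reindex_bij_betw)
qed


theorem lemma2:
  fixes Pr :: "'a measure"
    and N M T :: nat
    and S :: "nat \<Rightarrow> real"
    and P :: "nat \<Rightarrow> nat \<Rightarrow> nat \<Rightarrow> real"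
    and I :: "nat \<Rightarrow> nat \<Rightarrow> nat \<Rightarrow> 'a \<Rightarrow> real"
    and C C' :: "real \<Rightarrow> real"
  assumes prob: "prob_space Pr"
    and T_pos: "0 < T"
    and S_pos: "\<forall>m\<in>{1..M}. 0 < S m"
    and P_nonneg: "\<forall>n<N. \<forall>t<T. \<forall>m\<in>{1..M}. 0 \<le> P n t m"
    and P_sum: "\<forall>n<N. \<forall>t<T. (\<Sum>m=1..M. P n t m) \<le> 1"
    and I_meas: "\<forall>n<N. \<forall>t<T. \<forall>m\<in>{1..M}. I n t m \<in> borel_measurable Pr"
    and I_01: "\<forall>n<N. \<forall>t<T. \<forall>m\<in>{1..M}. \<forall>\<omega>\<in>space Pr. I n t m \<omega> \<in> {0, 1}"
    and I_prob: "\<forall>n<N. \<forall>t<T. \<forall>m\<in>{1..M}.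
                   measure Pr {\<omega>\<in>space Pr. I n t m \<omega> = 1} = P n t m"
    and I_one: "\<forall>n<N. \<forall>t<T. \<forall>\<omega>\<in>space Pr. (\<Sum>m=1..M. I n t m \<omega>) \<le> 1"
    and I_indep: "\<forall>t<T. \<forall>n<N. \<forall>k<N. n \<noteq> k \<longrightarrow>
                   prob_space.indep_var Pr
                     (Pi\<^sub>M {1..M} (\<lambda>_. borel)) (\<lambda>\<omega>. \<lambda>m\<in>{1..M}. I n t m \<omega>)
                     (Pi\<^sub>M {1..M} (\<lambda>_. borel)) (\<lambda>\<omega>. \<lambda>m\<in>{1..M}. I k t m \<omega>)"
    and C_nonneg: "\<forall>x\<ge>0. 0 \<le> C x"
    and C_smooth: "\<exists>D :: nat \<Rightarrow> real \<Rightarrow> real. D 0 = C \<and> D 1 = C' \<and>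
                     (\<forall>k. \<forall>x\<ge>0. (D k has_real_derivative D (Suc k) x) (at x within {0..}))"
    and C_strict_convex: "strictly_convex_on {0..} C"
    and C_mono: "mono_on {0..} C"
  shows "cost_reduction Pr N M T S I C
           \<le> (1 / real T) * (\<Sum>t<T. \<Sum>m=1..M.
                 S m * (\<Sum>n\<in>active_users Pr N M T S I C' t m. gain Pr N M T S I C' n t m))"
proof -
  interpret P: prob_space Pr by (rule prob)
  obtain D :: "nat \<Rightarrow> real \<Rightarrow> real" where D0: "D 0 = C" and D1: "D 1 = C'"
    and Dd: "\<forall>k. \<forall>x\<ge>0. (D k has_real_derivative D (Suc k) x) (at x within {0..})"
    using C_smooth by blast
  have dC: "(C has_real_derivative C' x) (at x within {0..})" if "x \<ge> 0" for x
    using Dd that D0 D1 by (metis One_nat_def)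
  have dC': "(C' has_real_derivative D 2 x) (at x within {0..})" if "x \<ge> 0" for x
    using Dd that D1 by (metis Suc_1 One_nat_def)
  have contC: "continuous_on {0..} C"
    unfolding continuous_on_eq_continuous_within using dC DERIV_continuous by (metis atLeast_iff)
  have contC': "continuous_on {0..} C'"
    unfolding continuous_on_eq_continuous_within using dC' DERIV_continuous by (metis atLeast_iff)
  have conv: "C (u*a + (1-u)*b) \<le> u * C a + (1-u) * C b"
    if "a \<ge> 0" "b \<ge> 0" "0 < u" "u < 1" for a b u
  proof (cases "a = b")
    case True then show ?thesis by (simp add: algebra_simps)
  next
    case False then show ?thesis using C_strict_convex that
      unfolding strictly_convex_on_def by (metis atLeast_iff less_imp_le order_refl)
  qed
  have tang: "C' c * (a - c) \<le> C a - C c" if "c \<ge> 0" "a \<ge> 0" for a c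
    by (rule tangent_ineq[OF conv dC[OF that(1)] that]) auto
  define SB where "SB = (\<Sum>m=1..M. \<Sum>n<N. S m)"
  have Lmeas: "load N M S I t \<in> borel_measurable Pr" if "t < T" for t
    unfolding load_def
    by (intro borel_measurable_sum borel_measurable_times borel_measurable_const)
       (use I_meas that in auto)
  have Ibnd: "0 \<le> I n t m \<omega> \<and> I n t m \<omega> \<le> 1"
    if "n < N" "t < T" "m \<in> {1..M}" "\<omega> \<in> space Pr" for n t m \<omega>
    using I_01 that by fastforce
  have Lbnd: "0 \<le> load N M S I t \<omega> \<and> load N M S I t \<omega> \<le> SB"
    if "t < T" "\<omega> \<in> space Pr" for t \<omega>
  proof -
    have "0 \<le> S m * I n t m \<omega> \<and> S m * I n t m \<omega> \<le> S m" if "m \<in> {1..M}" "n < N" for m n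
    proof -
      have "0 < S m" using S_pos that by blast
      moreover have "0 \<le> I n t m \<omega>" "I n t m \<omega> \<le> 1"
        using Ibnd[OF \<open>n < N\<close> \<open>t < T\<close> that(1) \<open>\<omega> \<in> space Pr\<close>] by auto
      ultimately show ?thesis by (auto intro: mult_left_le)
    qed
    then show ?thesis unfolding load_def SB_def
      by (auto intro!: sum_nonneg sum_mono simp del: sum_constant)
  qed
  have iC: "integrable Pr (\<lambda>\<omega>. C (load N M S I t \<omega>))" if "t < T" for t
    using P.integrable_comp[OF contC Lmeas[OF that], of "\<lambda>_. 1" SB] Lbnd that by simp
  have iC': "integrable Pr (\<lambda>\<omega>. C' (load N M S I t \<omega>))" if "t < T" for t
    using P.integrable_comp[OF contC' Lmeas[OF that], of "\<lambda>_. 1" SB] Lbnd that by simp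
  have iIC': "integrable Pr (\<lambda>\<omega>. I n t m \<omega> * C' (load N M S I t \<omega>))"
    if "n < N" "t < T" "m \<in> {1..M}" for n t m
    using P.integrable_comp[OF contC' Lmeas[OF that(2)], of "I n t m" SB] Lbnd Ibnd that I_meas
    by fastforce
  define G where "G t = integral\<^sup>L Pr (\<lambda>\<omega>. C' (load N M S I t \<omega>))" for t
  define H where "H n t m = integral\<^sup>L Pr (\<lambda>\<omega>. I n t m \<omega> * C' (load N M S I t \<omega>))" for n t m
  have gain_eq: "gain Pr N M T S I C' n t m = H n t m - G (prev_slot T t)"
    if "n < N" "t < T" "m \<in> {1..M}" for n t m
    unfolding gain_def H_def G_def
    by (rule Bochner_Integration.integral_diff[OF iIC'[OF that] iC'[OF prev_lt[OF T_pos]]])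
  define gn where "gn n t m = gain Pr N M T S I C' n t m" for n t m
  define R where "R = (1 / real T) * (\<Sum>t<T. \<Sum>m=1..M.
                 S m * (\<Sum>n\<in>active_users Pr N M T S I C' t m. gain Pr N M T S I C' n t m))"
  have key: "cost_nonproactive Pr N M T S I C - R \<le> proactive_objective Pr N M T S I C x"
    if feas: "feasible_policy N M T S x" for x
  proof -
    have xb: "0 \<le> x n t m \<and> x n t m \<le> S m" if "n < N" "t < T" "m \<in> {1..M}" for n t m
      using feas that unfolding feasible_policy_def by blast
    define Dl where "Dl t \<omega> = (\<Sum>m=1..M. \<Sum>n<N. x n (next_slot T t) m - x n t m * I n t m \<omega>)"
      for t \<omega>
    have per_t: "integral\<^sup>L Pr (\<lambda>\<omega>. C (load N M S I t \<omega> + Dl t \<omega>)) \<ge>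
        integral\<^sup>L Pr (\<lambda>\<omega>. C (load N M S I t \<omega>)) +
        (\<Sum>m=1..M. \<Sum>n<N. x n (next_slot T t) m * G t - x n t m * H n t m)"
      if t: "t < T" for t
    proof -
      have nt: "next_slot T t < T" by (rule next_lt[OF T_pos])
      have LD: "load N M S I t \<omega> + Dl t \<omega> =
          (\<Sum>m=1..M. \<Sum>n<N. (S m - x n t m) * I n t m \<omega> + x n (next_slot T t) m)" for \<omega>
        unfolding load_def Dl_def by (simp add: sum.distrib[symmetric] algebra_simps)
      have LDb: "0 \<le> load N M S I t \<omega> + Dl t \<omega> \<and> load N M S I t \<omega> + Dl t \<omega> \<le> 2 * SB"
        if \<omega>: "\<omega> \<in> space Pr" for \<omega>
      proof -
        have "0 \<le> (S m - x n t m) * I n t m \<omega> + x n (next_slot T t) m \<and>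
              (S m - x n t m) * I n t m \<omega> + x n (next_slot T t) m \<le> 2 * S m"
          if "m \<in> {1..M}" "n < N" for m n
        proof -
          have i: "0 \<le> I n t m \<omega>" "I n t m \<omega> \<le> 1" using Ibnd[OF that(2) t that(1) \<omega>] by auto
          have a: "0 \<le> x n t m" "x n t m \<le> S m" using xb[OF that(2) t that(1)] by auto
          have b: "0 \<le> x n (next_slot T t) m" "x n (next_slot T t) m \<le> S m"
            using xb[OF that(2) nt that(1)] by auto
          have "(S m - x n t m) * I n t m \<omega> \<le> (S m - x n t m)"
            using a i mult_left_mono[of "I n t m \<omega>" 1 "S m - x n t m"] by simp
          moreover have "0 \<le> (S m - x n t m) * I n t m \<omega>" using a i by simp
          ultimately show ?thesis using a b by linarith
        qed
        then show ?thesis unfolding LD SB_def sum_distrib_left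
          by (auto intro!: sum_nonneg sum_mono simp del: sum_constant)
      qed
      have Dmeas: "(\<lambda>\<omega>. load N M S I t \<omega> + Dl t \<omega>) \<in> borel_measurable Pr"
        unfolding Dl_def
        by (intro borel_measurable_add Lmeas[OF t] borel_measurable_sum borel_measurable_diff
            borel_measurable_times borel_measurable_const) (use I_meas t in auto)
      have iLD: "integrable Pr (\<lambda>\<omega>. C (load N M S I t \<omega> + Dl t \<omega>))"
        using P.integrable_comp[OF contC Dmeas, of "\<lambda>_. 1" "2*SB"] LDb by simp
      define Rf where "Rf \<omega> = C (load N M S I t \<omega>) + (\<Sum>m=1..M. \<Sum>n<N.
          x n (next_slot T t) m * C' (load N M S I t \<omega>) - x n t m * (I n t m \<omega> * C' (load N M S I t \<omega>)))"
        for \<omega>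
      have iR: "integrable Pr Rf"
        unfolding Rf_def
        by (intro Bochner_Integration.integrable_add iC[OF t] Bochner_Integration.integrable_sum
            Bochner_Integration.integrable_diff integrable_mult_right iC'[OF t] iIC'[OF _ t]) auto
      have intR: "integral\<^sup>L Pr Rf = integral\<^sup>L Pr (\<lambda>\<omega>. C (load N M S I t \<omega>)) +
        (\<Sum>m=1..M. \<Sum>n<N. x n (next_slot T t) m * G t - x n t m * H n t m)"
        unfolding Rf_def G_def H_def
        apply (subst Bochner_Integration.integral_add)
          apply (rule iC[OF t])
         apply (intro Bochner_Integration.integrable_sum Bochner_Integration.integrable_diff
            integrable_mult_right iC'[OF t] iIC'[OF _ t]; simp)
        apply (subst Bochner_Integration.integral_sum)
         apply (intro Bochner_Integration.integrable_sum Bochner_Integration.integrable_diff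
            integrable_mult_right iC'[OF t] iIC'[OF _ t]; simp)
        apply (intro arg_cong2[where f="(+)"] refl sum.cong)
        apply (subst Bochner_Integration.integral_sum)
         apply (intro Bochner_Integration.integrable_diff
            integrable_mult_right iC'[OF t] iIC'[OF _ t]; simp)
        apply (intro sum.cong refl)
        apply (subst Bochner_Integration.integral_diff)
          apply (intro integrable_mult_right iC'[OF t] iIC'[OF _ t]; simp)+
        apply simp
        done
      have pw: "Rf \<omega> \<le> C (load N M S I t \<omega> + Dl t \<omega>)" if \<omega>: "\<omega> \<in> space Pr" for \<omega>
      proof -
        have "C' (load N M S I t \<omega>) * ((load N M S I t \<omega> + Dl t \<omega>) - load N M S I t \<omega>)
             \<le> C (load N M S I t \<omega> + Dl t \<omega>) - C (load N M S I t \<omega>)"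
          using tang Lbnd[OF t \<omega>] LDb[OF \<omega>] by blast
        moreover have "C' (load N M S I t \<omega>) * Dl t \<omega> = (\<Sum>m=1..M. \<Sum>n<N.
          x n (next_slot T t) m * C' (load N M S I t \<omega>) - x n t m * (I n t m \<omega> * C' (load N M S I t \<omega>)))"
          unfolding Dl_def sum_distrib_left by (simp add: algebra_simps)
        ultimately show ?thesis unfolding Rf_def by simp
      qed
      have "integral\<^sup>L Pr Rf \<le> integral\<^sup>L Pr (\<lambda>\<omega>. C (load N M S I t \<omega> + Dl t \<omega>))"
        by (rule integral_mono[OF iR iLD pw])
      then show ?thesis using intR by simp
    qed
    define F where "F t = (\<Sum>m=1..M. \<Sum>n<N. x n t m * G (prev_slot T t))" for t
    have reidx: "(\<Sum>t<T. \<Sum>m=1..M. \<Sum>n<N. x n (next_slot T t) m * G t) = (\<Sum>t<T. F t)"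
    proof -
      have "(\<Sum>t<T. \<Sum>m=1..M. \<Sum>n<N. x n (next_slot T t) m * G t) = (\<Sum>t<T. F (next_slot T t))"
        by (rule sum.cong) (simp_all add: F_def next_prev)
      then show ?thesis using reindex_next[OF T_pos] by simp
    qed
    have gsum: "(\<Sum>t<T. \<Sum>m=1..M. \<Sum>n<N. x n t m * gn n t m) =
        (\<Sum>t<T. \<Sum>m=1..M. \<Sum>n<N. x n t m * H n t m) - (\<Sum>t<T. F t)"
    proof -
      have "(\<Sum>t<T. \<Sum>m=1..M. \<Sum>n<N. x n t m * gn n t m) =
          (\<Sum>t<T. \<Sum>m=1..M. \<Sum>n<N. x n t m * H n t m - x n t m * G (prev_slot T t))"
        by (intro sum.cong refl) (simp add: gn_def gain_eq right_diff_distrib)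
      then show ?thesis by (simp add: F_def sum_subtractf)
    qed
    have obj_ge: "proactive_objective Pr N M T S I C x \<ge>
        cost_nonproactive Pr N M T S I C - (1 / real T) * (\<Sum>t<T. \<Sum>m=1..M. \<Sum>n<N. x n t m * gn n t m)"
    proof -
      have "(\<Sum>t<T. integral\<^sup>L Pr (\<lambda>\<omega>. C (load N M S I t \<omega> + Dl t \<omega>))) \<ge>
          (\<Sum>t<T. integral\<^sup>L Pr (\<lambda>\<omega>. C (load N M S I t \<omega>)) +
          (\<Sum>m=1..M. \<Sum>n<N. x n (next_slot T t) m * G t - x n t m * H n t m))"
        by (rule sum_mono) (use per_t in auto)
      moreover have "(\<Sum>t<T. integral\<^sup>L Pr (\<lambda>\<omega>. C (load N M S I t \<omega>)) +
          (\<Sum>m=1..M. \<Sum>n<N. x n (next_slot T t) m * G t - x n t m * H n t m)) =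
          (\<Sum>t<T. integral\<^sup>L Pr (\<lambda>\<omega>. C (load N M S I t \<omega>))) +
          (\<Sum>t<T. \<Sum>m=1..M. \<Sum>n<N. x n (next_slot T t) m * G t)
          - (\<Sum>t<T. \<Sum>m=1..M. \<Sum>n<N. x n t m * H n t m)"
        by (simp add: sum.distrib sum_subtractf)
      ultimately have "(\<Sum>t<T. integral\<^sup>L Pr (\<lambda>\<omega>. C (load N M S I t \<omega> + Dl t \<omega>))) \<ge>
          (\<Sum>t<T. integral\<^sup>L Pr (\<lambda>\<omega>. C (load N M S I t \<omega>))) -
           (\<Sum>t<T. \<Sum>m=1..M. \<Sum>n<N. x n t m * gn n t m)"
        using reidx gsum by linarith
      then have "(1 / real T) * (\<Sum>t<T. integral\<^sup>L Pr (\<lambda>\<omega>. C (load N M S I t \<omega> + Dl t \<omega>))) \<ge>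
          (1 / real T) * ((\<Sum>t<T. integral\<^sup>L Pr (\<lambda>\<omega>. C (load N M S I t \<omega>))) -
           (\<Sum>t<T. \<Sum>m=1..M. \<Sum>n<N. x n t m * gn n t m))"
        by (intro mult_left_mono) auto
      then show ?thesis
        unfolding proactive_objective_def cost_nonproactive_def Dl_def
        by (simp add: right_diff_distrib)
    qed
    have bnd: "(\<Sum>t<T. \<Sum>m=1..M. \<Sum>n<N. x n t m * gn n t m) \<le>
        (\<Sum>t<T. \<Sum>m=1..M. S m * (\<Sum>n\<in>active_users Pr N M T S I C' t m. gain Pr N M T S I C' n t m))"
    proof (intro sum_mono)
      fix t m assume t: "t \<in> {..<T}" and m: "m \<in> {1..M}"
      have "(\<Sum>n<N. x n t m * gn n t m) \<le> (\<Sum>n<N. if gn n t m > 0 then S m * gn n t m else 0)"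
      proof (rule sum_mono)
        fix n assume n: "n \<in> {..<N}"
        have a: "0 \<le> x n t m" "x n t m \<le> S m" using xb n t m by auto
        show "x n t m * gn n t m \<le> (if gn n t m > 0 then S m * gn n t m else 0)"
          using a by (auto intro: mult_right_mono mult_nonneg_nonpos)
      qed
      also have "\<dots> = (\<Sum>n\<in>{n\<in>{..<N}. gn n t m > 0}. S m * gn n t m)"
        by (rule sum.inter_filter[symmetric]) simp
      also have "{n\<in>{..<N}. gn n t m > 0} = active_users Pr N M T S I C' t m"
        by (auto simp: active_users_def gn_def)
      finally show "(\<Sum>n<N. x n t m * gn n t m) \<le>
          S m * (\<Sum>n\<in>active_users Pr N M T S I C' t m. gain Pr N M T S I C' n t m)"
        by (simp add: sum_distrib_left gn_def)
    qed
    have "(1 / real T) * (\<Sum>t<T. \<Sum>m=1..M. \<Sum>n<N. x n t m * gn n t m) \<le> R"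
      unfolding R_def by (intro mult_left_mono bnd) auto
    then show ?thesis using obj_ge by linarith
  qed
  have ne: "{x. feasible_policy N M T S x} \<noteq> {}"
  proof -
    have "feasible_policy N M T S (\<lambda>_ _ _. 0)"
      unfolding feasible_policy_def using S_pos by auto
    then show ?thesis by blast
  qed
  have "cost_nonproactive Pr N M T S I C - R \<le>
      Inf (proactive_objective Pr N M T S I C ` {x. feasible_policy N M T S x})"
    by (rule cInf_greatest) (use ne key in auto)
  then show ?thesis
    unfolding cost_reduction_def cost_proactive_def R_def by linarith
qed

end
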